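(* Let $X\in\mathbb{R}^{m\times d}$ be the matrix whose rows are $x_1,\dots,x_m\in\mathbb{R}^d$, and let $\gamma>0$. The set $\{x_1,\dots,x_m\}$ is $\gamma$-shattered at the origin by $\mathcal{W}$ if and only if $XX^T$ is invertible and $y^T(XX^T)^{-1}y\le\gamma^{-2}$ for all $y\in\{\pm1\}^m$.
   Context: $\mathcal{W}=\{x\mapsto\langle w,x\rangle\mid w\in\mathbb{R}^d,\|w\|\le1\}$. A set $\{x_1,\dots,x_m\}$ is $\gamma$-shattered at the origin by $\mathcal{W}$ if for every $y\in\{\pm1\}^m$ there is $w$ with $\|w\|\le1$ and $y[i]\langle w,x_i\rangle\ge\gamma$ for all $i\in[m]$. *)

theory Defs
  imports "HOL-Analysis.Analysis"
begin

text \<open>Points x_1..x_m in R^d are the rows of X :: real^'d^'m (row i is X $ i).\<close>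

definition sign_vectors :: "(real ^ 'm) set" where
  "sign_vectors = {y. \<forall>i. y $ i = 1 \<or> y $ i = -1}"

definition shattered_at_origin :: "real \<Rightarrow> real ^ 'd ^ 'm \<Rightarrow> bool" where
  "shattered_at_origin \<gamma> X \<longleftrightarrow>
     (\<forall>y \<in> sign_vectors. \<exists>w :: real ^ 'd. norm w \<le> 1 \<and>
        (\<forall>i. y $ i * inner w (X $ i) \<ge> \<gamma>))"

end

theory Submission
  imports Defs
begin

lemma key_inner:
  fixes X :: "real ^ 'd ^ 'm"
  shows "inner w (transpose X *v a) = (\<Sum>i\<in>UNIV. a $ i * inner w (X $ i))"
proof -
  have "inner w (transpose X *v a) = inner (a v* X) w"
    by (simp add: inner_commute)
  also have "\<dots> = inner a (X *v w)" by (rule dot_lmul_matrix)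
  also have "\<dots> = (\<Sum>i\<in>UNIV. a $ i * inner w (X $ i))"
    by (simp add: inner_vec_def matrix_vector_mul_component inner_commute mult.commute)
  finally show ?thesis .
qed

lemma key_norm:
  fixes X :: "real ^ 'd ^ 'm"
  shows "inner (transpose X *v a) (transpose X *v a) = inner a ((X ** transpose X) *v a)"
proof -
  have "inner (transpose X *v a) (transpose X *v a) = inner (a v* X) (transpose X *v a)"
    by simp
  also have "\<dots> = inner a (X *v (transpose X *v a))" by (rule dot_lmul_matrix)
  also have "\<dots> = inner a ((X ** transpose X) *v a)" by (simp only: matrix_vector_mul_assoc)
  finally show ?thesis .
qed

lemma key_bound:
  fixes X :: "real ^ 'd ^ 'm"
  assumes sh: "shattered_at_origin \<gamma> X"
  shows "\<gamma> * (\<Sum>i\<in>UNIV. \<bar>a $ i\<bar>) \<le> norm (transpose X *v a)"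
proof -
  define s :: "real ^ 'm" where "s = (\<chi> i. if a $ i \<ge> 0 then 1 else -1)"
  have "s \<in> sign_vectors" by (simp add: s_def sign_vectors_def)
  then obtain w :: "real ^ 'd" where w: "norm w \<le> 1" "\<And>i. s $ i * inner w (X $ i) \<ge> \<gamma>"
    using sh unfolding shattered_at_origin_def by blast
  have "\<gamma> * (\<Sum>i\<in>UNIV. \<bar>a $ i\<bar>) = (\<Sum>i\<in>UNIV. \<bar>a $ i\<bar> * \<gamma>)"
    by (simp add: sum_distrib_left mult.commute)
  also have "\<dots> \<le> (\<Sum>i\<in>UNIV. a $ i * inner w (X $ i))"
  proof (rule sum_mono)
    fix i
    have "\<bar>a $ i\<bar> * \<gamma> \<le> \<bar>a $ i\<bar> * (s $ i * inner w (X $ i))"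
      using w(2)[of i] by (simp add: mult_left_mono)
    also have "\<dots> = a $ i * inner w (X $ i)"
      by (simp add: s_def abs_if)
    finally show "\<bar>a $ i\<bar> * \<gamma> \<le> a $ i * inner w (X $ i)" .
  qed
  also have "\<dots> = inner w (transpose X *v a)" by (rule key_inner[symmetric])
  also have "\<dots> \<le> norm w * norm (transpose X *v a)" by (rule norm_cauchy_schwarz)
  also have "\<dots> \<le> norm (transpose X *v a)"
    using w(1) by (simp add: mult_left_le_one_le)
  finally show ?thesis .
qed

theorem mainTheorem6:
  fixes X :: "real ^ 'd ^ 'm" and \<gamma> :: real
  assumes "\<gamma> > 0"
  shows "shattered_at_origin \<gamma> X \<longleftrightarrow>
           (invertible (X ** transpose X) \<and>
            (\<forall>y \<in> sign_vectors. y \<bullet> (matrix_inv (X ** transpose X) *v y) \<le> 1 / \<gamma>\<^sup>2))"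
proof -
  let ?G = "X ** transpose X"
  have inv_prop: "?G ** matrix_inv ?G = mat 1 \<and> matrix_inv ?G ** ?G = mat 1" if "invertible ?G"
    using that unfolding invertible_def matrix_inv_def by (rule someI_ex)
  show ?thesis
  proof
    assume sh: "shattered_at_origin \<gamma> X"
    have inv: "invertible ?G"
      unfolding invertible_left_inverse matrix_left_invertible_ker
    proof (intro allI impI)
      fix a assume "?G *v a = 0"
      then have "inner (transpose X *v a) (transpose X *v a) = 0" by (simp only: key_norm inner_zero_right)
      then have "norm (transpose X *v a) = 0" by simp
      then have "\<gamma> * (\<Sum>i\<in>UNIV. \<bar>a $ i\<bar>) \<le> 0" using key_bound[OF sh, of a] by simp
      then have "(\<Sum>i\<in>UNIV. \<bar>a $ i\<bar>) \<le> 0" using assms by (simp add: mult_le_0_iff)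
      then have "\<forall>i\<in>UNIV. \<bar>a $ i\<bar> = 0"
        using sum_nonneg_eq_0_iff[of UNIV "\<lambda>i. \<bar>a $ i\<bar>"] by (simp add: order_antisym)
      then show "a = 0" by (simp add: vec_eq_iff)
    qed
    show "invertible ?G \<and> (\<forall>y \<in> sign_vectors. y \<bullet> (matrix_inv ?G *v y) \<le> 1 / \<gamma>\<^sup>2)"
    proof (intro conjI inv ballI)
      fix y :: "real ^ 'm" assume y: "y \<in> sign_vectors"
      define a where "a = matrix_inv ?G *v y"
      define v where "v = transpose X *v a"
      have Ga: "?G *v a = y" using inv_prop[OF inv]
        by (simp add: a_def matrix_vector_mul_assoc)
      have ya: "inner y a = (norm v)^2"
        using key_norm[of X a] Ga by (simp add: v_def power2_norm_eq_inner inner_commute)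
      have "inner y a \<le> (\<Sum>i\<in>UNIV. \<bar>a $ i\<bar>)"
        unfolding inner_vec_def
      proof (rule sum_mono)
        fix i
        have "y $ i = 1 \<or> y $ i = -1" using y by (simp add: sign_vectors_def)
        then show "inner (y $ i) (a $ i) \<le> \<bar>a $ i\<bar>" by auto
      qed
      then have "\<gamma> * (norm v)^2 \<le> norm v"
        using key_bound[OF sh, of a] ya assms unfolding v_def
        by (smt (verit) mult_left_mono)
      then have nv: "\<gamma> * norm v \<le> 1"
        by (cases "norm v = 0") (auto simp: power2_eq_square)
      have "(\<gamma> * norm v)^2 \<le> 1" using nv assms
        by (metis mult_nonneg_nonneg norm_ge_zero less_imp_le power_le_one)
      then have "\<gamma>^2 * (norm v)^2 \<le> 1" by (simp add: power_mult_distrib)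
      then have "(norm v)^2 \<le> 1 / \<gamma>^2" using assms
        by (simp add: field_simps)
      then show "y \<bullet> (matrix_inv ?G *v y) \<le> 1 / \<gamma>\<^sup>2" using ya by (simp add: a_def)
    qed
  next
    assume r: "invertible ?G \<and> (\<forall>y \<in> sign_vectors. y \<bullet> (matrix_inv ?G *v y) \<le> 1 / \<gamma>\<^sup>2)"
    show "shattered_at_origin \<gamma> X"
      unfolding shattered_at_origin_def
    proof
      fix y :: "real ^ 'm" assume y: "y \<in> sign_vectors"
      define a where "a = \<gamma> *s (matrix_inv ?G *v y)"
      define w where "w = transpose X *v a"
      have Ga: "?G *v a = \<gamma> *s y" using inv_prop r
        by (simp add: a_def matrix_vector_mul_assoc vector_smult_assoc matrix_vector_mult_scaleR[symmetric] scalar_mult_eq_scaleR)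
      have comp: "inner w (X $ i) = \<gamma> * y $ i" for i
      proof -
        have "inner w (X $ i) = (X *v w) $ i" by (simp add: matrix_vector_mul_component inner_commute)
        also have "X *v w = ?G *v a" by (simp only: w_def matrix_vector_mul_assoc)
        finally show ?thesis using Ga by simp
      qed
      have "(norm w)^2 = inner a (?G *v a)"
        unfolding w_def power2_norm_eq_inner by (rule key_norm)
      also have "\<dots> = \<gamma>^2 * (y \<bullet> (matrix_inv ?G *v y))"
        using Ga by (simp add: a_def scalar_mult_eq_scaleR power2_eq_square inner_commute)
      also have "\<dots> \<le> \<gamma>^2 * (1 / \<gamma>^2)"
        using r y by (intro mult_left_mono) auto
      also have "\<dots> = 1" using assms by simp
      finally have "norm w \<le> 1"
        by (metis abs_norm_cancel power2_le_imp_le norm_ge_zero zero_le_one power_one)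
      moreover have "\<forall>i. y $ i * inner w (X $ i) \<ge> \<gamma>"
      proof
        fix i
        have "y $ i = 1 \<or> y $ i = -1" using y by (simp add: sign_vectors_def)
        then show "y $ i * inner w (X $ i) \<ge> \<gamma>" by (auto simp: comp)
      qed
      ultimately show "\<exists>w :: real ^ 'd. norm w \<le> 1 \<and> (\<forall>i. y $ i * inner w (X $ i) \<ge> \<gamma>)"
        by blast
    qed
  qed
qed

end
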